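(* Let $Q\in\mathbb{R}^{n\times n}$ be symmetric positive definite, $A\in\mathbb{R}^{m\times n}$ with no zero rows, $b\in\mathbb{R}^m$, $c\in\mathbb{R}^n$, and suppose the problem $P(Q,A,b,c)$: $\min_{x\in\mathbb{R}^n}\frac12 x^\intercal Qx+c^\intercal x$ s.t. $Ax\preceq b$ is feasible, with optimal solution $x^\ast$. Let $\mu^\ast$ be an optimal solution of the dual problem $\max_{\mu\succeq 0} g(\mu)$, where $g(\mu)=-\frac12(A^\intercal\mu+c)^\intercal Q^{-1}(A^\intercal\mu+c)-\mu^\intercal b$, and let $t:=\operatorname{sign}(\mu^\ast+\nabla g(\mu^\ast))\in\{+1,-1,0\}^m$ (componentwise), where $\nabla g(\mu)=-AQ^{-1}(A^\intercal\mu+c)-b$. Suppose an adversary (the target node) knows $A$, $Q$, $x^\ast$ and $t$. Then $c$ cannot be uniquely retrieved by the adversary — i.e., there exist $c'\in\mathbb{R}^n$ with $c'\neq c$, $b'\in\mathbb{R}^m$, and an optimal solution $\mu'$ of the dual of $P(Q,A,b',c')$ (dual function $g'$ defined as $g$ with $b',c'$ in place of $b,c$) such that $x^\ast$ is the optimal solution of $P(Q,A,b',c')$ and $\operatorname{sign}(\mu'+\nabla g'(\mu'))=t$ — if and only if $t_i>0$ for some $i\in\{1,\dots,m\}$.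
   Context: Vector inequalities $\preceq,\succeq$ are element-wise. The paper's notion of non-unique retrieval: a private input cannot be uniquely retrieved by an adversary if there are at least two values of it, each consistent (together with some values of the other data unknown to the adversary) with everything the adversary knows; the claim makes this explicit for the knowledge $(A,Q,x^\ast,t)$. *)

theory Defs
  imports "HOL-Analysis.Analysis"
begin

definition sym_pos_def_mat :: "real^'n^'n \<Rightarrow> bool" where
  "sym_pos_def_mat Q \<longleftrightarrow> transpose Q = Q \<and> (\<forall>x. x \<noteq> 0 \<longrightarrow> x \<bullet> (Q *v x) > 0)"

definition no_zero_rows :: "real^'n^'m \<Rightarrow> bool" where
  "no_zero_rows A \<longleftrightarrow> (\<forall>i. row i A \<noteq> 0)"

definition qp_obj :: "real^'n^'n \<Rightarrow> real^'n \<Rightarrow> real^'n \<Rightarrow> real" where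
  "qp_obj Q c x = (1/2) * (x \<bullet> (Q *v x)) + c \<bullet> x"

definition qp_feasible :: "real^'n^'m \<Rightarrow> real^'m \<Rightarrow> real^'n \<Rightarrow> bool" where
  "qp_feasible A b x \<longleftrightarrow> (\<forall>i. (A *v x) $ i \<le> b $ i)"

definition qp_optimal :: "real^'n^'n \<Rightarrow> real^'n^'m \<Rightarrow> real^'m \<Rightarrow> real^'n \<Rightarrow> real^'n \<Rightarrow> bool" where
  "qp_optimal Q A b c x \<longleftrightarrow> qp_feasible A b x \<and>
     (\<forall>y. qp_feasible A b y \<longrightarrow> qp_obj Q c x \<le> qp_obj Q c y)"

definition dual_fun :: "real^'n^'n \<Rightarrow> real^'n^'m \<Rightarrow> real^'m \<Rightarrow> real^'n \<Rightarrow> real^'m \<Rightarrow> real" where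
  "dual_fun Q A b c mu =
     - (1/2) * ((transpose A *v mu + c) \<bullet> (matrix_inv Q *v (transpose A *v mu + c))) - mu \<bullet> b"

definition dual_grad :: "real^'n^'n \<Rightarrow> real^'n^'m \<Rightarrow> real^'m \<Rightarrow> real^'n \<Rightarrow> real^'m \<Rightarrow> real^'m" where
  "dual_grad Q A b c mu = - (A *v (matrix_inv Q *v (transpose A *v mu + c))) - b"

definition nonneg_vec :: "real^'m \<Rightarrow> bool" where
  "nonneg_vec mu \<longleftrightarrow> (\<forall>i. 0 \<le> mu $ i)"

definition dual_optimal :: "real^'n^'n \<Rightarrow> real^'n^'m \<Rightarrow> real^'m \<Rightarrow> real^'n \<Rightarrow> real^'m \<Rightarrow> bool" where
  "dual_optimal Q A b c mu \<longleftrightarrow> nonneg_vec mu \<and>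
     (\<forall>nu. nonneg_vec nu \<longrightarrow> dual_fun Q A b c nu \<le> dual_fun Q A b c mu)"

definition vsign :: "real^'m \<Rightarrow> real^'m" where
  "vsign v = (\<chi> i. sgn (v $ i))"

end

theory Submission
  imports Defs
begin

lemma spd_inv:
  fixes Q :: "real^'n^'n"
  assumes "sym_pos_def_mat Q"
  shows "Q ** matrix_inv Q = mat 1 \<and> matrix_inv Q ** Q = mat 1"
proof -
  have "inj ((*v) Q)"
  proof (rule injI)
    fix x y assume "Q *v x = Q *v y"
    hence "Q *v (x - y) = 0" by (simp add: matrix_vector_mult_diff_distrib)
    thus "x = y" using assms unfolding sym_pos_def_mat_def
      by (metis inner_zero_right less_irrefl right_minus_eq)
  qed
  hence "invertible Q"
    using matrix_left_invertible_injective invertible_left_inverse by blast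
  thus ?thesis unfolding invertible_def matrix_inv_def by (rule someI_ex)
qed

lemma QP: "sym_pos_def_mat Q \<Longrightarrow> Q *v (matrix_inv Q *v v) = v"
  using spd_inv by (metis matrix_vector_mul_assoc matrix_vector_mul_lid)
lemma PQ: "sym_pos_def_mat Q \<Longrightarrow> matrix_inv Q *v (Q *v v) = v"
  using spd_inv by (metis matrix_vector_mul_assoc matrix_vector_mul_lid)

lemma adj: "((A::real^'n^'m) *v x) \<bullet> mu = x \<bullet> (transpose A *v mu)"
  by (metis dot_lmul_matrix inner_commute transpose_matrix_vector)

lemma symQ: "sym_pos_def_mat Q \<Longrightarrow> x \<bullet> (Q *v y) = (Q *v x) \<bullet> y"
  unfolding sym_pos_def_mat_def by (metis adj inner_commute)

lemma symP: "sym_pos_def_mat Q \<Longrightarrow> x \<bullet> (matrix_inv Q *v y) = (matrix_inv Q *v x) \<bullet> y"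
  by (metis QP symQ)

lemma psdQ: "sym_pos_def_mat Q \<Longrightarrow> 0 \<le> x \<bullet> (Q *v x)"
  unfolding sym_pos_def_mat_def by (metis inner_zero_left less_eq_real_def)

lemma psdP: "sym_pos_def_mat Q \<Longrightarrow> 0 \<le> x \<bullet> (matrix_inv Q *v x)"
  by (metis QP psdQ inner_commute)

lemma row_axis: "transpose (A::real^'n^'m) *v axis i 1 = row i A"
proof -
  have "\<And>k. (\<Sum>j\<in>UNIV. (if j = i then 1 else 0) * A $ j $ k) = A $ i $ k"
  proof -
    fix k
    have "(\<Sum>j\<in>UNIV. (if j = i then 1 else 0) * A $ j $ k) = (\<Sum>j\<in>UNIV. (if j = i then A $ j $ k else 0))"
      by (rule sum.cong) auto
    thus "?thesis k" by simp
  qed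
  thus ?thesis by (simp add: vec_eq_iff vector_matrix_mult_def axis_def row_def)
qed

lemma dual_expand:
  fixes Q :: "real^'n^'n" and A :: "real^'n^'m"
  assumes "sym_pos_def_mat Q"
  shows "dual_fun Q A b c nu = dual_fun Q A b c mu + dual_grad Q A b c mu \<bullet> (nu - mu)
     - (1/2) * ((transpose A *v (nu - mu)) \<bullet> (matrix_inv Q *v (transpose A *v (nu - mu))))"
proof -
  define P where "P = matrix_inv Q"
  define w where "w = transpose A *v mu + c"
  define d where "d = transpose A *v (nu - mu)"
  have u: "transpose A *v nu + c = w + d" unfolding w_def d_def
    by (simp add: matrix_vector_mult_diff_distrib)
  have s: "w \<bullet> (P *v d) = d \<bullet> (P *v w)" using symP[OF assms] unfolding P_def
    by (metis inner_commute)
  have g: "dual_grad Q A b c mu \<bullet> (nu - mu) = - ((P *v w) \<bullet> d) - b \<bullet> (nu - mu)"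
    unfolding dual_grad_def P_def[symmetric] w_def[symmetric] d_def
    by (simp add: inner_diff_left adj)
  show ?thesis
    unfolding dual_fun_def P_def[symmetric] w_def[symmetric] u g d_def[symmetric]
    by (simp add: matrix_vector_right_distrib inner_add_left inner_add_right s
        inner_diff_left inner_diff_right inner_commute algebra_simps)
qed

lemma arith_contra:
  fixes g K m :: real
  assumes "g > 0" "K \<ge> 0" "m > 0"
    and H: "\<And>s. 0 < s \<Longrightarrow> s \<le> m \<Longrightarrow> s * g - (1/2) * (s^2 * K) \<le> 0"
  shows False
proof -
  define s where "s = min m (g / (K + 1))"
  have s0: "s > 0" using assms by (simp add: s_def)
  have s1: "s \<le> g / (K+1)" by (simp add: s_def)
  have "s * g \<le> s * (s * K / 2)" using H[OF s0] by (simp add: s_def power2_eq_square algebra_simps)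
  hence "g \<le> s * K / 2" using s0 by simp
  also have "\<dots> \<le> (g / (K+1)) * K / 2"
  proof -
    have "s * K \<le> (g / (K+1)) * K" using mult_right_mono[OF s1 assms(2)] .
    thus ?thesis by (rule divide_right_mono) simp
  qed
  finally have "g * (2 * (K+1)) \<le> g * K" using assms by (simp add: field_simps)
  thus False using assms by (simp add: algebra_simps) (smt (verit) mult_nonneg_nonneg)
qed

lemma dual_opt_iff:
  fixes Q :: "real^'n^'n" and A :: "real^'n^'m"
  assumes Q: "sym_pos_def_mat Q"
  shows "dual_optimal Q A b c mu \<longleftrightarrow> nonneg_vec mu \<and> (\<forall>i. dual_grad Q A b c mu $ i \<le> 0)
           \<and> (\<forall>i. mu $ i * dual_grad Q A b c mu $ i = 0)"
    (is "_ \<longleftrightarrow> ?N \<and> ?G \<and> ?C")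
proof
  let ?g = "dual_grad Q A b c mu"
  assume opt: "dual_optimal Q A b c mu"
  hence N: ?N unfolding dual_optimal_def by simp
  define K where "K = (\<lambda>i. (transpose A *v axis i 1) \<bullet> (matrix_inv Q *v (transpose A *v axis i 1)))"
  have key: "s * (?g $ i) - (1/2) * (s^2 * K i) \<le> 0" if "0 \<le> mu $ i + s" for i s
  proof -
    let ?nu = "mu + s *\<^sub>R axis i 1"
    have nn: "nonneg_vec ?nu" using N that unfolding nonneg_vec_def
      by (auto simp: axis_def)
    have "dual_fun Q A b c ?nu \<le> dual_fun Q A b c mu" using opt nn unfolding dual_optimal_def by blast
    moreover have "dual_fun Q A b c ?nu = dual_fun Q A b c mu + s * (?g $ i) - (1/2) * (s^2 * K i)"
      using dual_expand[OF Q, of A b c ?nu mu] unfolding K_def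
      by (simp add: matrix_vector_mult_scaleR inner_axis power2_eq_square)
    ultimately show ?thesis by simp
  qed
  have K0: "K i \<ge> 0" for i unfolding K_def using psdP[OF Q] by blast
  have G: ?G
  proof (rule ccontr)
    assume "\<not> ?G"
    then obtain i where "?g $ i > 0" by (meson not_le)
    moreover have "s * (?g $ i) - (1/2) * (s^2 * K i) \<le> 0" if "0 < s" "s \<le> 1" for s
      using key[of i s] N that unfolding nonneg_vec_def by (meson add_nonneg_nonneg less_imp_le)
    ultimately show False using arith_contra[of "?g $ i" "K i" 1] K0 by auto
  qed
  have C: ?C
  proof (rule ccontr)
    assume "\<not> ?C"
    then obtain i where i: "mu $ i * ?g $ i \<noteq> 0" by blast
    hence m: "mu $ i > 0" and gi: "- ?g $ i > 0" using N G unfolding nonneg_vec_def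
      by (auto simp: less_le)
    have "s * (- ?g $ i) - (1/2) * (s^2 * K i) \<le> 0" if "0 < s" "s \<le> mu $ i" for s
      using key[of i "-s"] that by simp
    thus False using arith_contra[of "- ?g $ i" "K i" "mu $ i"] K0 m gi by auto
  qed
  show "?N \<and> ?G \<and> ?C" using N G C by blast
next
  let ?g = "dual_grad Q A b c mu"
  assume H: "?N \<and> ?G \<and> ?C"
  show "dual_optimal Q A b c mu" unfolding dual_optimal_def
  proof (intro conjI allI impI)
    show "nonneg_vec mu" using H by blast
    fix nu :: "real^'m" assume nu: "nonneg_vec nu"
    have "?g \<bullet> nu \<le> 0" unfolding inner_vec_def
      using H nu unfolding nonneg_vec_def by (auto intro!: sum_nonpos simp: mult_nonpos_nonneg)
    moreover have "?g \<bullet> mu = 0" unfolding inner_vec_def using H by (simp add: mult.commute sum.neutral)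
    moreover have "0 \<le> (transpose A *v (nu - mu)) \<bullet> (matrix_inv Q *v (transpose A *v (nu - mu)))"
      using psdP[OF Q] by blast
    ultimately show "dual_fun Q A b c nu \<le> dual_fun Q A b c mu"
      using dual_expand[OF Q, of A b c nu mu] by (simp add: inner_diff_right)
  qed
qed

lemma mv_neg: "(A::real^'n^'m) *v (- v) = - (A *v v)"
  by (simp add: vec_eq_iff matrix_vector_mult_def sum_negf)

lemma primal_kkt:
  fixes Q :: "real^'n^'n" and A :: "real^'n^'m"
  assumes Q: "sym_pos_def_mat Q" and N: "nonneg_vec mu"
    and G: "\<forall>i. dual_grad Q A b c mu $ i \<le> 0" and C: "\<forall>i. mu $ i * dual_grad Q A b c mu $ i = 0"
  defines "y \<equiv> - (matrix_inv Q *v (transpose A *v mu + c))"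
  shows "qp_optimal Q A b c y \<and> (\<forall>x. qp_optimal Q A b c x \<longrightarrow> x = y)"
proof -
  let ?g = "dual_grad Q A b c mu"
  have Gy: "?g = A *v y - b" unfolding dual_grad_def y_def mv_neg by simp
  have feas: "qp_feasible A b y" using G unfolding Gy qp_feasible_def by simp
  have Qy: "Q *v y = - (transpose A *v mu + c)" unfolding y_def mv_neg QP[OF Q] ..
  have gmu: "?g \<bullet> mu = 0" unfolding inner_vec_def using C by (simp add: sum.neutral mult.commute)
  have exp: "qp_obj Q c z = qp_obj Q c y - (A *v z - b) \<bullet> mu + (1/2) * ((z - y) \<bullet> (Q *v (z - y)))" for z
  proof -
    define h where "h = z - y"
    have z: "z = y + h" by (simp add: h_def)
    have s: "y \<bullet> (Q *v h) = h \<bullet> (Q *v y)" using symQ[OF Q, of y h] inner_commute[of "Q *v y" h] by simp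
    have "qp_obj Q c z = qp_obj Q c y + h \<bullet> (Q *v y + c) + (1/2) * (h \<bullet> (Q *v h))"
      unfolding qp_obj_def z by (simp add: matrix_vector_right_distrib inner_add_left inner_add_right s
        algebra_simps inner_commute[of c h])
    also have "h \<bullet> (Q *v y + c) = - ((A *v h) \<bullet> mu)" unfolding Qy by (simp add: adj)
    also have "A *v h = (A *v z - b) - (A *v y - b)" unfolding h_def by (simp add: matrix_vector_mult_diff_distrib)
    finally show ?thesis using gmu unfolding Gy by (simp add: inner_diff_left h_def)
  qed
  have ge: "qp_obj Q c y + (1/2) * ((z - y) \<bullet> (Q *v (z - y))) \<le> qp_obj Q c z" if "qp_feasible A b z" for z
  proof -
    have "(A *v z - b) \<bullet> mu \<le> 0" unfolding inner_vec_def using that N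
      unfolding qp_feasible_def nonneg_vec_def by (auto intro!: sum_nonpos simp: mult_nonpos_nonneg)
    thus ?thesis using exp[of z] by simp
  qed
  have opt: "qp_optimal Q A b c y" unfolding qp_optimal_def
  proof (intro conjI allI impI feas)
    fix z assume "qp_feasible A b z"
    from ge[OF this] psdQ[OF Q, of "z - y"] show "qp_obj Q c y \<le> qp_obj Q c z" by linarith
  qed
  have uniq: "x = y" if "qp_optimal Q A b c x" for x
  proof (rule ccontr)
    assume ne: "x \<noteq> y"
    have "qp_obj Q c x \<le> qp_obj Q c y" "qp_feasible A b x" using that feas unfolding qp_optimal_def by auto
    hence "(x - y) \<bullet> (Q *v (x - y)) \<le> 0" using ge[of x] by simp
    moreover have "(x - y) \<bullet> (Q *v (x - y)) > 0" using Q ne unfolding sym_pos_def_mat_def by simp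
    ultimately show False by simp
  qed
  show ?thesis using opt uniq by blast
qed

lemma zero_mu:
  fixes mu g :: "real^'m"
  assumes "nonneg_vec mu" "\<forall>i. mu $ i * g $ i = 0" "\<forall>i. vsign (mu + g) $ i \<le> 0"
  shows "mu = 0"
proof -
  have "mu $ i = 0" for i
  proof (rule ccontr)
    assume "mu $ i \<noteq> 0"
    hence m: "mu $ i > 0" using assms(1) unfolding nonneg_vec_def by (simp add: less_le)
    hence "g $ i = 0" using assms(2)[rule_format, of i] by simp
    hence "vsign (mu + g) $ i = 1" using m by (simp add: vsign_def)
    thus False using assms(3) by (metis not_one_le_zero)
  qed
  thus ?thesis by (simp add: vec_eq_iff)
qed

theorem proposition6:
  fixes Q :: "real^'n^'n" and A :: "real^'n^'m" and b :: "real^'m" and c :: "real^'n"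
    and xstar :: "real^'n" and mustar :: "real^'m" and t :: "real^'m"
  assumes "sym_pos_def_mat Q"
    and "no_zero_rows A"
    and "qp_optimal Q A b c xstar"
    and "dual_optimal Q A b c mustar"
    and "t = vsign (mustar + dual_grad Q A b c mustar)"
  shows "(\<exists>c' b' mu'. c' \<noteq> c \<and> qp_optimal Q A b' c' xstar \<and> dual_optimal Q A b' c' mu'
            \<and> vsign (mu' + dual_grad Q A b' c' mu') = t)
         \<longleftrightarrow> (\<exists>i. t $ i > 0)"
proof -
  note Q = assms(1)
  let ?G = "dual_grad Q A b c mustar"
  have N: "nonneg_vec mustar" and Gn: "\<forall>i. ?G $ i \<le> 0" and C: "\<forall>i. mustar $ i * ?G $ i = 0"
    using assms(4) dual_opt_iff[OF Q] by blast+
  have xs: "xstar = - (matrix_inv Q *v (transpose A *v mustar + c))"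
    using primal_kkt[OF Q N Gn C] assms(3) by blast
  show ?thesis
  proof
    assume "\<exists>c' b' mu'. c' \<noteq> c \<and> qp_optimal Q A b' c' xstar \<and> dual_optimal Q A b' c' mu'
            \<and> vsign (mu' + dual_grad Q A b' c' mu') = t"
    then obtain c' b' mu' where ne: "c' \<noteq> c" and po: "qp_optimal Q A b' c' xstar"
      and do: "dual_optimal Q A b' c' mu'" and vs: "vsign (mu' + dual_grad Q A b' c' mu') = t" by blast
    let ?G' = "dual_grad Q A b' c' mu'"
    have N': "nonneg_vec mu'" and Gn': "\<forall>i. ?G' $ i \<le> 0" and C': "\<forall>i. mu' $ i * ?G' $ i = 0"
      using do dual_opt_iff[OF Q] by blast+
    have xs': "xstar = - (matrix_inv Q *v (transpose A *v mu' + c'))"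
      using primal_kkt[OF Q N' Gn' C'] po by blast
    show "\<exists>i. t $ i > 0"
    proof (rule ccontr)
      assume "\<not> (\<exists>i. t $ i > 0)"
      hence tle: "\<forall>i. t $ i \<le> 0" by (simp add: not_less)
      have "mustar = 0" using zero_mu[OF N C] tle assms(5) by simp
      moreover have "mu' = 0" using zero_mu[OF N' C'] tle vs by simp
      moreover have "Q *v xstar = - (transpose A *v mustar + c)" unfolding xs mv_neg QP[OF Q] ..
      moreover have "Q *v xstar = - (transpose A *v mu' + c')"
        using xs' by (metis mv_neg QP[OF Q])
      ultimately have "Q *v xstar = - c" "Q *v xstar = - c'" by simp_all
      thus False using ne by simp
    qed
  next
    assume "\<exists>i. t $ i > 0"
    then obtain i where ti: "t $ i > 0" by blast
    hence "mustar $ i + ?G $ i > 0" using assms(5) by (simp add: vsign_def sgn_greater)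
    hence mi: "mustar $ i > 0" using Gn[rule_format, of i] by linarith
    hence Gi: "?G $ i = 0" using C[rule_format, of i] by simp
    define c' where "c' = c - transpose A *v axis i 1"
    define mu' where "mu' = mustar + axis i (1::real)"
    have same: "transpose A *v mu' + c' = transpose A *v mustar + c"
      unfolding c'_def mu'_def by (simp add: matrix_vector_right_distrib)
    have G': "dual_grad Q A b c' mu' = ?G" unfolding dual_grad_def same ..
    have ne: "c' \<noteq> c" using assms(2) unfolding c'_def no_zero_rows_def row_axis by simp
    have N': "nonneg_vec mu'" using N unfolding nonneg_vec_def mu'_def by (simp add: axis_def)
    have C': "\<forall>j. mu' $ j * dual_grad Q A b c' mu' $ j = 0" unfolding G'
    proof
      fix j show "mu' $ j * ?G $ j = 0"
        using C Gi by (cases "j = i") (simp_all add: mu'_def axis_def)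
    qed
    have Gn': "\<forall>j. dual_grad Q A b c' mu' $ j \<le> 0" unfolding G' using Gn .
    have do: "dual_optimal Q A b c' mu'" using dual_opt_iff[OF Q] N' C' Gn' by blast
    have po: "qp_optimal Q A b c' xstar"
      using primal_kkt[OF Q N' Gn' C'] unfolding same xs[symmetric] by blast
    have vs: "vsign (mu' + dual_grad Q A b c' mu') = t"
      unfolding G' assms(5) vsign_def vec_eq_iff
    proof
      fix j show "(\<chi> i. sgn ((mu' + ?G) $ i)) $ j = (\<chi> i. sgn ((mustar + ?G) $ i)) $ j"
        using Gi mi by (cases "j = i") (simp_all add: mu'_def axis_def)
    qed
    show "\<exists>c' b' mu'. c' \<noteq> c \<and> qp_optimal Q A b' c' xstar \<and> dual_optimal Q A b' c' mu'
            \<and> vsign (mu' + dual_grad Q A b' c' mu') = t"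
      using ne po do vs by blast
  qed
qed

end
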